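(* There is no real number $s$ such that $S(a,b)\le\lambda_s(a,b)$ holds for all $a,b>0$.
   Context: For $a,b>0$ with $a\neq b$ define $$\lambda_s(a,b)=\begin{cases}\dfrac{s-1}{s+1}\cdot\dfrac{a^{s+1}+b^{s+1}-2\left(\frac{a+b}{2}\right)^{s+1}}{a^s+b^s-2\left(\frac{a+b}{2}\right)^s}, & s\in\mathbb{R}\setminus\{-1,0,1\},\\[3mm] \dfrac{2\log\frac{a+b}{2}-\log a-\log b}{\frac{1}{2a}+\frac{1}{2b}-\frac{2}{a+b}}, & s=-1,\\[3mm] \dfrac{a\log a+b\log b-(a+b)\log\frac{a+b}{2}}{2\log\frac{a+b}{2}-\log a-\log b}, & s=0,\\[3mm] \dfrac{(b-a)^2}{4\left(a\log a+b\log b-(a+b)\log\frac{a+b}{2}\right)}, & s=1,\end{cases}$$ and $\lambda_s(a,a)=a$. The Gini mean is $S(a,b)=a^{a/(a+b)}\,b^{b/(a+b)}$. *)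

theory Defs
  imports Complex_Main
begin

definition lam :: "real \<Rightarrow> real \<Rightarrow> real \<Rightarrow> real" where
  "lam s a b =
    (if a = b then a
     else if s = -1 then
       (2 * ln ((a+b)/2) - ln a - ln b) / (1/(2*a) + 1/(2*b) - 2/(a+b))
     else if s = 0 then
       (a * ln a + b * ln b - (a+b) * ln ((a+b)/2)) / (2 * ln ((a+b)/2) - ln a - ln b)
     else if s = 1 then
       (b - a)^2 / (4 * (a * ln a + b * ln b - (a+b) * ln ((a+b)/2)))
     else
       (s - 1) / (s + 1) *
       ((a powr (s+1) + b powr (s+1) - 2 * ((a+b)/2) powr (s+1)) /
        (a powr s + b powr s - 2 * ((a+b)/2) powr s)))"

definition gini :: "real \<Rightarrow> real \<Rightarrow> real" where
  "gini a b = a powr (a/(a+b)) * b powr (b/(a+b))"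

end

theory Submission
  imports Defs "HOL-Analysis.Analysis" "HOL-Real_Asymp.Real_Asymp"
begin

lemma ev01: "eventually (\<lambda>t::real. 0 < t \<and> t < 1) (at_right 0)"
  using eventually_at_right_real[of 0 1] by simp

lemma lim_m1: "((\<lambda>t. lam (-1) 1 t) \<longlongrightarrow> 0) (at_right 0)"
proof -
  have "((\<lambda>t::real. (2 * ln ((1+t)/2) - ln 1 - ln t) / (1/(2*1) + 1/(2*t) - 2/(1+t))) \<longlongrightarrow> 0) (at_right 0)"
    by real_asymp
  then show ?thesis
    by (rule tendsto_cong[THEN iffD1, rotated]) (rule eventually_mono[OF ev01], simp add: lam_def)
qed

lemma lim_0: "((\<lambda>t. lam 0 1 t) \<longlongrightarrow> 0) (at_right 0)"
proof -
  have "((\<lambda>t::real. (1 * ln 1 + t * ln t - (1+t) * ln ((1+t)/2)) / (2 * ln ((1+t)/2) - ln 1 - ln t)) \<longlongrightarrow> 0) (at_right 0)"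
    by real_asymp
  then show ?thesis
    by (rule tendsto_cong[THEN iffD1, rotated]) (rule eventually_mono[OF ev01], simp add: lam_def)
qed

lemma lim_1: "((\<lambda>t. lam 1 1 t) \<longlongrightarrow> - (inverse (ln (1 / 2)) / 4)) (at_right 0)"
proof -
  have "((\<lambda>t::real. (t - 1)^2 / (4 * (1 * ln 1 + t * ln t - (1+t) * ln ((1+t)/2)))) \<longlongrightarrow> - (inverse (ln (1 / 2)) / 4)) (at_right 0)"
    by real_asymp
  then show ?thesis
    by (rule tendsto_cong[THEN iffD1, rotated]) (rule eventually_mono[OF ev01], simp add: lam_def)
qed

lemma gini_lim: "((\<lambda>t. gini 1 t) \<longlongrightarrow> 1) (at_right 0)"
proof -
  have "((\<lambda>t::real. t powr (t/(1+t))) \<longlongrightarrow> 1) (at_right 0)" by real_asymp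
  then show ?thesis by (simp add: gini_def)
qed

lemma pos_case:
  assumes s0: "s > 0" and s1: "s \<noteq> 1"
  shows "\<exists>L<1. ((\<lambda>t. lam s 1 t) \<longlongrightarrow> L) (at_right 0)"
proof -
  define p where "p = 2 powr s"
  have pe: "p = exp (s * ln 2)" by (simp add: p_def powr_def)
  have h1: "(1/2::real) powr s = 1/p" by (simp add: p_def powr_divide)
  have h2: "(1/2::real) powr (s+1) = 1/(2*p)" by (simp add: p_def powr_divide powr_add)
  have p1: "p > 1" using s0 by (simp add: pe)
  have l2: "ln (2::real) \<ge> 2/3" by (rule ln2_ge_two_thirds)
  define L where "L = (s-1)/(s+1) * ((1 + 0 - 2 * (1/(2*p))) / (1 + 0 - 2 * (1/p)))"
  have L1: "L < 1"
  proof (cases "s > 1")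
    case True
    have "exp ((s-1) * ln 2) \<ge> 1 + (s-1) * ln 2" by (rule exp_ge_add_one_self)
    moreover have "p = 2 * exp ((s-1) * ln 2)"
      by (simp add: pe algebra_simps exp_diff)
    moreover have "(s-1) * ln 2 \<ge> (s-1) * (2/3)" using True l2 by (intro mult_left_mono) auto
    ultimately have "2*p \<ge> 4 + (8/3)*(s-1)" by linarith
    hence pp: "2*p > s+3 \<and> p > 2" using True by (auto simp: field_simps)
    have q: "(1 + 0 - 2*(1/(2*p))) / (1 + 0 - 2*(1/p)) = (p-1)/(p-2)"
      using p1 pp by (simp add: field_simps)
    have Leq: "L = (s-1)*(p-1) / ((s+1)*(p-2))" unfolding L_def q by simp
    have dp: "(s+1)*(p-2) > 0" using pp s0 by (intro mult_pos_pos) auto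
    have "(s-1)*(p-1) < (s+1)*(p-2)" using pp by (simp add: algebra_simps)
    hence "(s-1)*(p-1) / ((s+1)*(p-2)) < 1" using dp by (simp add: divide_less_eq_1_pos)
    thus ?thesis using Leq by simp
  next
    case False
    hence s01: "s < 1" using s1 by simp
    have "exp ((1 - s) *\<^sub>R 0 + s *\<^sub>R ln 2) \<le> (1 - s) * exp 0 + s * exp (ln 2)"
      by (rule convex_onD[OF exp_convex]) (use s0 s01 in auto)
    hence "p \<le> 1 + s" by (simp add: pe algebra_simps)
    hence pp: "2*p < s+3 \<and> p < 2" using s01 by (auto simp: field_simps)
    have q: "(1 + 0 - 2*(1/(2*p))) / (1 + 0 - 2*(1/p)) = (p-1)/(p-2)"
      using p1 pp by (simp add: field_simps)
    have Leq: "L = (1-s)*(p-1) / ((s+1)*(2-p))" unfolding L_def q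
      by (simp add: divide_simps) (simp add: algebra_simps)
    have dp: "(s+1)*(2-p) > 0" using pp s0 by (intro mult_pos_pos) auto
    have "(1-s)*(p-1) < (s+1)*(2-p)" using pp by (simp add: algebra_simps)
    hence "(1-s)*(p-1) / ((s+1)*(2-p)) < 1" using dp by (simp add: divide_less_eq_1_pos)
    thus ?thesis using Leq by simp
  qed
  have ev0: "eventually (\<lambda>t::real. 0 \<le> t) (at_right 0)"
    by (rule eventually_mono[OF ev01]) auto
  have t0: "((\<lambda>t::real. t) \<longlongrightarrow> 0) (at_right 0)" by (rule tendsto_ident_at)
  have A: "((\<lambda>t::real. t powr (s+1)) \<longlongrightarrow> 0) (at_right 0)"
    by (rule tendsto_zero_powrI[OF t0 tendsto_const ev0]) (use s0 in simp)
  have B: "((\<lambda>t::real. t powr s) \<longlongrightarrow> 0) (at_right 0)"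
    by (rule tendsto_zero_powrI[OF t0 tendsto_const ev0]) (use s0 in simp)
  have C: "((\<lambda>t::real. ((1+t)/2) powr (s+1)) \<longlongrightarrow> 1/(2*p)) (at_right 0)"
    unfolding h2[symmetric] by (rule tendsto_powr) (auto intro!: tendsto_eq_intros)
  have D: "((\<lambda>t::real. ((1+t)/2) powr s) \<longlongrightarrow> 1/p) (at_right 0)"
    unfolding h1[symmetric] by (rule tendsto_powr) (auto intro!: tendsto_eq_intros)
  have p2: "p \<noteq> 2"
  proof
    assume "p = 2"
    hence "log 2 (2 powr s) = log 2 2" by (simp add: p_def)
    thus False using s1 by simp
  qed
  have den: "1 + 0 - 2 * (1/p) \<noteq> 0" using p1 p2
    by (auto simp: field_simps)
  have "((\<lambda>t. (s-1)/(s+1) * ((1 + t powr (s+1) - 2 * ((1+t)/2) powr (s+1)) /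
        (1 + t powr s - 2 * ((1+t)/2) powr s))) \<longlongrightarrow> L) (at_right 0)"
    unfolding L_def by (intro tendsto_intros A B C D den)
  hence "((\<lambda>t. lam s 1 t) \<longlongrightarrow> L) (at_right 0)"
    by (rule tendsto_cong[THEN iffD1, rotated]) (rule eventually_mono[OF ev01], use s0 s1 in \<open>simp add: lam_def\<close>)
  thus ?thesis using L1 by blast
qed

lemma neg_case:
  assumes s0: "s < 0" and s1: "s \<noteq> -1"
  shows "((\<lambda>t. lam s 1 t) \<longlongrightarrow> 0) (at_right 0)"
proof -
  have ev0: "eventually (\<lambda>t::real. 0 \<le> t) (at_right 0)"
    by (rule eventually_mono[OF ev01]) auto
  have t0: "((\<lambda>t::real. t) \<longlongrightarrow> 0) (at_right 0)" by (rule tendsto_ident_at)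
  have M: "((\<lambda>t::real. t powr (-s)) \<longlongrightarrow> 0) (at_right 0)"
    by (rule tendsto_zero_powrI[OF t0 tendsto_const ev0]) (use s0 in simp)
  have C: "((\<lambda>t::real. ((1+t)/2) powr (s+1)) \<longlongrightarrow> (1/2) powr (s+1)) (at_right 0)"
    by (rule tendsto_powr) (auto intro!: tendsto_eq_intros)
  have D: "((\<lambda>t::real. ((1+t)/2) powr s) \<longlongrightarrow> (1/2) powr s) (at_right 0)"
    by (rule tendsto_powr) (auto intro!: tendsto_eq_intros)
  have lim: "((\<lambda>t. (s-1)/(s+1) * ((t powr (-s) + t - 2 * (t powr (-s) * ((1+t)/2) powr (s+1))) /
        (t powr (-s) + 1 - 2 * (t powr (-s) * ((1+t)/2) powr s)))) \<longlongrightarrow>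
        (s-1)/(s+1) * ((0 + 0 - 2 * (0 * (1/2) powr (s+1))) / (0 + 1 - 2 * (0 * (1/2) powr s)))) (at_right 0)"
    by (intro tendsto_intros M C D t0) simp
  have eq: "lam s 1 t = (s-1)/(s+1) * ((t powr (-s) + t - 2 * (t powr (-s) * ((1+t)/2) powr (s+1))) /
        (t powr (-s) + 1 - 2 * (t powr (-s) * ((1+t)/2) powr s)))" if t: "0 < t" "t < 1" for t :: real
  proof -
    define m where "m = t powr (-s)"
    have m0: "m > 0" using t by (simp add: m_def)
    have e1: "m * t powr (s+1) = t" using t by (simp add: m_def powr_add[symmetric])
    have e2: "m * t powr s = 1" using t by (simp add: m_def powr_add[symmetric])
    have "(1 + t powr (s+1) - 2*((1+t)/2) powr (s+1)) / (1 + t powr s - 2*((1+t)/2) powr s)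
        = (m * (1 + t powr (s+1) - 2*((1+t)/2) powr (s+1))) / (m * (1 + t powr s - 2*((1+t)/2) powr s))"
      using m0 by simp
    also have "\<dots> = (m + t - 2 * (m * ((1+t)/2) powr (s+1))) / (m + 1 - 2 * (m * ((1+t)/2) powr s))"
      by (simp add: right_diff_distrib distrib_left e1 e2 mult.left_commute[of m 2])
    finally show ?thesis using t s0 s1 by (simp add: lam_def m_def)
  qed
  have lim0: "((\<lambda>t. (s-1)/(s+1) * ((t powr (-s) + t - 2 * (t powr (-s) * ((1+t)/2) powr (s+1))) /
        (t powr (-s) + 1 - 2 * (t powr (-s) * ((1+t)/2) powr s)))) \<longlongrightarrow> 0) (at_right 0)"
    using lim by simp
  show ?thesis
    using lim0 by (rule tendsto_cong[THEN iffD1, rotated]) (rule eventually_mono[OF ev01], use eq in auto)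
qed

theorem theorem3:
  shows "\<not> (\<exists>s::real. \<forall>a b::real. a > 0 \<longrightarrow> b > 0 \<longrightarrow> gini a b \<le> lam s a b)"
proof
  assume "\<exists>s::real. \<forall>a b::real. a > 0 \<longrightarrow> b > 0 \<longrightarrow> gini a b \<le> lam s a b"
  then obtain s where H: "\<And>a b. a > 0 \<Longrightarrow> b > 0 \<Longrightarrow> gini a b \<le> lam s a b" by blast
  have "\<exists>L<1. ((\<lambda>t. lam s 1 t) \<longlongrightarrow> L) (at_right 0)"
  proof -
    consider "s = -1" | "s = 0" | "s = 1" | "s > 0 \<and> s \<noteq> 1" | "s < 0 \<and> s \<noteq> -1" by linarith
    then show ?thesis
    proof cases
      case 1 thus ?thesis using lim_m1 by (intro exI[of _ 0]) auto
    next
      case 2 thus ?thesis using lim_0 by (intro exI[of _ 0]) auto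
    next
      case 3
      have "ln (2::real) \<ge> 2/3" by (rule ln2_ge_two_thirds)
      hence "- (inverse (ln (1 / 2::real)) / 4) < 1" by (simp add: ln_div field_simps)
      thus ?thesis using lim_1 3 by (intro exI[of _ "- (inverse (ln (1 / 2::real)) / 4)"]) auto
    next
      case 4 thus ?thesis using pos_case by auto
    next
      case 5 thus ?thesis using neg_case by (intro exI[of _ 0]) auto
    qed
  qed
  then obtain L where L1: "L < 1" and lim: "((\<lambda>t. lam s 1 t) \<longlongrightarrow> L) (at_right 0)" by blast
  define c where "c = (L + 1) / 2"
  have Lc: "L < c" "c < 1" using L1 by (simp_all add: c_def)
  have "eventually (\<lambda>t. lam s 1 t < c) (at_right 0)"
    using order_tendstoD(2)[OF lim Lc(1)] .
  moreover have "eventually (\<lambda>t. gini 1 t > c) (at_right 0)"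
    using order_tendstoD(1)[OF gini_lim Lc(2)] .
  ultimately have "eventually (\<lambda>t::real. False) (at_right 0)"
    using ev01 proof eventually_elim
    case (elim t)
    hence "gini 1 t \<le> lam s 1 t" using H[of 1 t] by simp
    thus False using elim by linarith
  qed
  thus False by simp
qed

end
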